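(* A locally compact Hausdorff space $X$ has the universal fixed point property if and only if it has the fixed point property with respect to the space $C(X,X)$.
   Context: $C(X,X)$ is the set of continuous self-maps of $X$ with the compact-open topology (generated by the sets $\{g\mid g(K)\subseteq U\}$, $K\subseteq X$ compact, $U\subseteq X$ open). A space $X$ has the fixed point property with respect to a topological space $T$ if for every continuous map $f\colon T\times X\to X$ there exists a continuous map $p\colon T\to X$ with $f(t,p(t))=p(t)$ for all $t\in T$. It has the universal fixed point property if it has the fixed point property with respect to every topological space $T$. *)

theory Defs
  imports "HOL-Analysis.Analysis"
begin

text \<open>Maps are represented as
  extensional functions (value undefined outside the topspace), so that each
  continuous self-map corresponds to exactly one HOL function.\<close>
definition cmaps :: "'a topology \<Rightarrow> ('a \<Rightarrow> 'a) set" where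
  "cmaps X = {g. continuous_map X X g \<and> g \<in> extensional (topspace X)}"

definition compact_open_topology :: "'a topology \<Rightarrow> ('a \<Rightarrow> 'a) topology" where
  "compact_open_topology X =
     topology_generated_by
       {{g \<in> cmaps X. g ` K \<subseteq> U} | K U. compactin X K \<and> openin X U}"

definition fpp_wrt :: "'b topology \<Rightarrow> 'a topology \<Rightarrow> bool" where
  "fpp_wrt T X \<longleftrightarrow>
     (\<forall>f. continuous_map (prod_topology T X) X f \<longrightarrow>
        (\<exists>p. continuous_map T X p \<and> (\<forall>t\<in>topspace T. f (t, p t) = p t)))"

end

theory Submission
  imports Defs
begin

lemma co_topspace: "topspace (compact_open_topology X) = cmaps X"
  unfolding compact_open_topology_def
  by (auto simp: topology_generated_by_topspace)

lemma co_open: "compactin X K \<Longrightarrow> openin X U \<Longrightarrow>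
   openin (compact_open_topology X) {g \<in> cmaps X. g ` K \<subseteq> U}"
  unfolding compact_open_topology_def by (rule topology_generated_by_Basis) blast

lemma eval_cont:
  assumes lc: "locally_compact_space X" and H: "Hausdorff_space X"
  shows "continuous_map (prod_topology (compact_open_topology X) X) X (\<lambda>(g,x). g x)"
proof -
  have nb: "neighbourhood_base_of (compactin X) X"
    using lc H locally_compact_space_neighbourhood_base by blast
  show ?thesis
    unfolding continuous_map
  proof (intro conjI allI impI)
    show "(\<lambda>(g, x). g x) ` topspace (prod_topology (compact_open_topology X) X) \<subseteq> topspace X"
    proof
      fix y assume "y \<in> (\<lambda>(g, x). g x) ` topspace (prod_topology (compact_open_topology X) X)"
      then obtain g x where "g \<in> cmaps X" "x \<in> topspace X" "y = g x"
        by (auto simp: co_topspace)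
      then show "y \<in> topspace X" unfolding cmaps_def
        using continuous_map_image_subset_topspace by fastforce
    qed
    fix U assume U: "openin X U"
    show "openin (prod_topology (compact_open_topology X) X)
      {x \<in> topspace (prod_topology (compact_open_topology X) X). (case x of (g, x) \<Rightarrow> g x) \<in> U}"
      (is "openin ?P ?S")
    proof (subst openin_subopen, intro ballI)
      fix z assume z: "z \<in> ?S"
      obtain g x where zz: "z = (g,x)" by (cases z) blast
      have g: "g \<in> cmaps X" and x: "x \<in> topspace X" and gx: "g x \<in> U"
        using z unfolding zz by (simp_all add: co_topspace)
      have gc: "continuous_map X X g" using g by (simp add: cmaps_def)
      have W: "openin X {y \<in> topspace X. g y \<in> U}"
        using gc U by (simp add: continuous_map)
      obtain V K where V: "openin X V" and K: "compactin X K" and xV: "x \<in> V" and VK: "V \<subseteq> K"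
        and KW: "K \<subseteq> {y \<in> topspace X. g y \<in> U}"
      proof -
        have "x \<in> {y \<in> topspace X. g y \<in> U}" using x gx by simp
        from nb[unfolded neighbourhood_base_of, rule_format, OF conjI[OF W this]]
        show ?thesis using that by blast
      qed
      let ?T = "{h \<in> cmaps X. h ` K \<subseteq> U} \<times> V"
      have "openin ?P ?T" using co_open[OF K U] V by (simp add: openin_prod_Times_iff)
      moreover have "z \<in> ?T" using zz g KW xV by auto
      moreover have "?T \<subseteq> ?S"
      proof
        fix w assume "w \<in> ?T"
        then obtain h y where w: "w = (h,y)" "h \<in> cmaps X" "h ` K \<subseteq> U" "y \<in> V" by blast
        have "y \<in> topspace X" using openin_subset[OF V] w(4) by blast
        moreover have "h y \<in> U" using w VK by blast
        ultimately show "w \<in> ?S" using w by (simp add: co_topspace)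
      qed
      ultimately show "\<exists>T. openin ?P T \<and> z \<in> T \<and> T \<subseteq> ?S" by blast
    qed
  qed
qed

lemma curry_cont:
  assumes f: "continuous_map (prod_topology T X) X f"
  shows "continuous_map T (compact_open_topology X) (\<lambda>t. restrict (\<lambda>x. f (t,x)) (topspace X))"
proof -
  have inC: "restrict (\<lambda>x. f (t,x)) (topspace X) \<in> cmaps X" if t: "t \<in> topspace T" for t
  proof -
    have "continuous_map X (prod_topology T X) (\<lambda>x. (t,x))"
      by (rule continuous_map_pairedI) (simp_all add: t)
    from continuous_map_compose[OF this f]
    have "continuous_map X X (\<lambda>x. f (t,x))" by (simp add: o_def)
    then have "continuous_map X X (restrict (\<lambda>x. f (t,x)) (topspace X))"
      by (rule continuous_map_eq) auto
    then show ?thesis by (simp add: cmaps_def)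
  qed
  show ?thesis
    unfolding compact_open_topology_def
  proof (rule continuous_on_generated_topo)
    show "(\<lambda>t. restrict (\<lambda>x. f (t, x)) (topspace X)) ` topspace T \<subseteq>
      \<Union> {{g \<in> cmaps X. g ` K \<subseteq> U} |K U. compactin X K \<and> openin X U}"
    proof -
      have "cmaps X \<in> {{g \<in> cmaps X. g ` K \<subseteq> U} |K U. compactin X K \<and> openin X U}"
        by (rule CollectI, rule exI[of _ "{}"], rule exI[of _ "topspace X"]) simp
      then show ?thesis using inC by blast
    qed
    fix S assume "S \<in> {{g \<in> cmaps X. g ` K \<subseteq> U} |K U. compactin X K \<and> openin X U}"
    then obtain K U where S: "S = {g \<in> cmaps X. g ` K \<subseteq> U}" and K: "compactin X K" and U: "openin X U"
      by (auto simp only: mem_Collect_eq)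
    have KX: "K \<subseteq> topspace X" using K compactin_subset_topspace by blast
    have pre: "(\<lambda>t. restrict (\<lambda>x. f (t, x)) (topspace X)) -` S \<inter> topspace T
       = {t \<in> topspace T. \<forall>x\<in>K. f (t,x) \<in> U}"
    proof (rule set_eqI, rule iffI)
      fix t assume "t \<in> (\<lambda>t. restrict (\<lambda>x. f (t, x)) (topspace X)) -` S \<inter> topspace T"
      then show "t \<in> {t \<in> topspace T. \<forall>x\<in>K. f (t,x) \<in> U}" using KX unfolding S by auto
    next
      fix t assume "t \<in> {t \<in> topspace T. \<forall>x\<in>K. f (t,x) \<in> U}"
      then show "t \<in> (\<lambda>t. restrict (\<lambda>x. f (t, x)) (topspace X)) -` S \<inter> topspace T"
        using KX inC unfolding S by auto
    qed
    have W: "openin (prod_topology T X) {z \<in> topspace (prod_topology T X). f z \<in> U}"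
      using f U by (simp add: continuous_map)
    show "openin T ((\<lambda>t. restrict (\<lambda>x. f (t, x)) (topspace X)) -` S \<inter> topspace T)"
      unfolding pre
    proof (subst openin_subopen, intro ballI)
      fix t assume t: "t \<in> {t \<in> topspace T. \<forall>x\<in>K. f (t,x) \<in> U}"
      have "{t} \<times> K \<subseteq> {z \<in> topspace (prod_topology T X). f z \<in> U}"
        using t KX by auto
      then obtain A B where "openin T A" "openin X B" "t \<in> A" "K \<subseteq> B"
          "A \<times> B \<subseteq> {z \<in> topspace (prod_topology T X). f z \<in> U}"
        using tube_lemma_right[OF W K, of t] t by auto
      then show "\<exists>A. openin T A \<and> t \<in> A \<and> A \<subseteq> {t \<in> topspace T. \<forall>x\<in>K. f (t,x) \<in> U}"
      proof (intro exI[of _ A] conjI subsetI CollectI ballI)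
        fix s assume "s \<in> A"
        then show "s \<in> topspace T" using \<open>openin T A\<close> openin_subset by blast
        fix x assume "x \<in> K"
        then show "f (s,x) \<in> U" using \<open>s \<in> A\<close> \<open>K \<subseteq> B\<close> \<open>A \<times> B \<subseteq> _\<close> by blast
      qed
    qed
  qed
qed

theorem corollary7p4:
  fixes X :: "'a topology"
  assumes "locally_compact_space X" and "Hausdorff_space X"
  shows "(fpp_wrt (compact_open_topology X) X \<longrightarrow> (\<forall>T :: 'b topology. fpp_wrt T X))
       \<and> ((\<forall>T :: ('a \<Rightarrow> 'a) topology. fpp_wrt T X) \<longrightarrow> fpp_wrt (compact_open_topology X) X)"
proof (rule conjI)
  show "(\<forall>T :: ('a \<Rightarrow> 'a) topology. fpp_wrt T X) \<longrightarrow> fpp_wrt (compact_open_topology X) X"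
    by (rule impI, erule allE)
  show "fpp_wrt (compact_open_topology X) X \<longrightarrow> (\<forall>T :: 'b topology. fpp_wrt T X)"
  proof (intro impI allI)
  fix T :: "'b topology"
  assume fp: "fpp_wrt (compact_open_topology X) X"
  show "fpp_wrt T X" unfolding fpp_wrt_def
  proof (intro allI impI)
    fix f assume f: "continuous_map (prod_topology T X) X f"
    from fp[unfolded fpp_wrt_def, rule_format, OF eval_cont[OF assms]]
    obtain p where p: "continuous_map (compact_open_topology X) X p"
      and pf: "\<And>g. g \<in> topspace (compact_open_topology X) \<Longrightarrow> (\<lambda>(g,x). g x) (g, p g) = p g"
      by blast
    let ?c = "\<lambda>t. restrict (\<lambda>x. f (t,x)) (topspace X)"
    have c: "continuous_map T (compact_open_topology X) ?c" by (rule curry_cont[OF f])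
    have q: "continuous_map T X (p \<circ> ?c)" using continuous_map_compose[OF c p] .
    show "\<exists>p. continuous_map T X p \<and> (\<forall>t\<in>topspace T. f (t, p t) = p t)"
    proof (intro exI conjI ballI)
      show "continuous_map T X (p \<circ> ?c)" by (rule q)
      fix t assume t: "t \<in> topspace T"
      have ct: "?c t \<in> topspace (compact_open_topology X)"
        using continuous_map_image_subset_topspace[OF c] t by blast
      have pt: "(p \<circ> ?c) t \<in> topspace X" 
        using continuous_map_image_subset_topspace[OF q] t by blast
      have e1: "?c t (p (?c t)) = p (?c t)" using pf[OF ct] by (simp only: case_prod_conv)
      have e2: "?c t (p (?c t)) = f (t, p (?c t))"
        using pt unfolding o_def by (simp only: restrict_apply' )
      show "f (t, (p \<circ> ?c) t) = (p \<circ> ?c) t" unfolding o_def using e2[symmetric] e1 by (rule trans)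
    qed
  qed
  qed
qed

end
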